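(* Let $\phi_1,\phi_2$ be $^*$-endomorphisms of $\mathcal{Q}_2$ with $\phi_2$ a $^*$-automorphism, and suppose $\phi_1|_{\mathcal{B}_2}=\phi_2|_{\mathcal{B}_2}$. Then there exists $t\in\mathbb{T}$ such that $\phi_1=\phi_2\circ\alpha_t$.
   Context: $\mathcal{Q}_2$ is the universal unital $C^*$-algebra generated by a unitary $u$ and an isometry $s_2$ with $s_2u=u^2s_2$, $s_2s_2^*+us_2s_2^*u^*=1$. The gauge action $\alpha:\mathbb{T}\curvearrowright\mathcal{Q}_2$ is given by $\alpha_t(u)=u$, $\alpha_t(s_2)=ts_2$. $\mathcal{B}_2:=\overline{\operatorname{span}}\{u^ms_2^ns_2^{*n}u^k:m,k\in\mathbb{Z},n\ge0\}$ (the fixed-point algebra of $\alpha$). *)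

theory Defs
  imports "HOL-Analysis.Analysis"
begin

class cstar_algebra = real_normed_algebra_1 + banach +
  fixes cscale :: "complex \<Rightarrow> 'a \<Rightarrow> 'a"
    and adj :: "'a \<Rightarrow> 'a"
  assumes cscale_add_left: "cscale (a + b) x = cscale a x + cscale b x"
    and cscale_add_right: "cscale a (x + y) = cscale a x + cscale a y"
    and cscale_cscale: "cscale a (cscale b x) = cscale (a * b) x"
    and cscale_of_real: "cscale (of_real r) x = scaleR r x"
    and cscale_mult_left: "cscale a x * y = cscale a (x * y)"
    and cscale_mult_right: "x * cscale a y = cscale a (x * y)"
    and norm_cscale: "norm (cscale a x) = cmod a * norm x"
    and adj_adj: "adj (adj x) = x"
    and adj_add: "adj (x + y) = adj x + adj y"
    and adj_mult: "adj (x * y) = adj y * adj x"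
    and adj_cscale: "adj (cscale a x) = cscale (cnj a) (adj x)"
    and cstar_identity: "norm (adj x * x) = (norm x)\<^sup>2"

definition closed_star_subalgebra :: "'a::cstar_algebra set \<Rightarrow> bool" where
  "closed_star_subalgebra S \<longleftrightarrow> closed S \<and> 1 \<in> S \<and>
     (\<forall>x\<in>S. \<forall>y\<in>S. x + y \<in> S \<and> x * y \<in> S) \<and>
     (\<forall>x\<in>S. \<forall>c. cscale c x \<in> S) \<and> (\<forall>x\<in>S. adj x \<in> S)"

definition generates :: "'a::cstar_algebra set \<Rightarrow> bool" where
  "generates G \<longleftrightarrow> (\<forall>S. closed_star_subalgebra S \<and> G \<subseteq> S \<longrightarrow> S = UNIV)"

definition cspan :: "'a::cstar_algebra set \<Rightarrow> 'a set" where
  "cspan S = {(\<Sum>x\<in>F. cscale (c x) x) | F c. finite F \<and> F \<subseteq> S}"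

definition closed_cspan :: "'a::cstar_algebra set \<Rightarrow> 'a set" where
  "closed_cspan S = closure (cspan S)"

definition star_hom :: "('a::cstar_algebra \<Rightarrow> 'a) \<Rightarrow> bool" where
  "star_hom f \<longleftrightarrow> (\<forall>x y. f (x + y) = f x + f y) \<and>
     (\<forall>c x. f (cscale c x) = cscale c (f x)) \<and>
     (\<forall>x y. f (x * y) = f x * f y) \<and> (\<forall>x. f (adj x) = adj (f x))"

definition star_aut :: "('a::cstar_algebra \<Rightarrow> 'a) \<Rightarrow> bool" where
  "star_aut f \<longleftrightarrow> star_hom f \<and> bij f"

definition upow :: "'a::cstar_algebra \<Rightarrow> int \<Rightarrow> 'a" where
  "upow u m = (if 0 \<le> m then u ^ nat m else adj u ^ nat (- m))"

definition Q2_relations :: "'a::cstar_algebra \<Rightarrow> 'a \<Rightarrow> bool" where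
  "Q2_relations u s2 \<longleftrightarrow>
     adj u * u = 1 \<and> u * adj u = 1 \<and> adj s2 * s2 = 1 \<and>
     s2 * u = u ^ 2 * s2 \<and>
     s2 * adj s2 + u * s2 * adj s2 * adj u = 1"

definition B2 :: "'a::cstar_algebra \<Rightarrow> 'a \<Rightarrow> 'a set" where
  "B2 u s2 = closed_cspan
     {upow u m * s2 ^ n * adj s2 ^ n * upow u k | m k n. True}"

text \<open>The gauge automorphism alpha_t: the *-endomorphism fixing u and sending
s2 to t s2 (determined uniquely on a generated algebra).\<close>

definition is_gauge :: "'a::cstar_algebra \<Rightarrow> 'a \<Rightarrow> complex \<Rightarrow> ('a \<Rightarrow> 'a) \<Rightarrow> bool" where
  "is_gauge u s2 t g \<longleftrightarrow> star_hom g \<and> g u = u \<and> g s2 = cscale t s2"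

end

theory Submission
  imports Defs
begin
lemma adj_one[simp]: "adj (1::'a::cstar_algebra) = 1"
  by (metis adj_mult adj_adj mult_1_right)

lemma adj_zero[simp]: "adj (0::'a::cstar_algebra) = 0"
  by (metis adj_add add_cancel_right_right)

lemma adj_uminus: "adj (- x) = - adj (x::'a::cstar_algebra)"
  by (metis adj_add adj_zero add_eq_0_iff2 neg_eq_iff_add_eq_0)

lemma adj_diff: "adj (x - y) = adj x - adj (y::'a::cstar_algebra)"
  by (metis adj_add adj_uminus diff_conv_add_uminus)

lemma adj_sum: "adj (sum f A) = sum (\<lambda>i. adj (f i)) (A::'b set)" for f :: "'b \<Rightarrow> 'a::cstar_algebra"
  by (induction A rule: infinite_finite_induct) (auto simp: adj_add)

lemma adj_power: "adj (x ^ n) = adj (x::'a::cstar_algebra) ^ n"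
  by (induction n) (auto simp: adj_mult power_commutes)

lemma cscale_zero_left[simp]: "cscale 0 x = (0::'a::cstar_algebra)"
  by (metis cscale_of_real of_real_0 scaleR_zero_left)

lemma cscale_one[simp]: "cscale 1 x = (x::'a::cstar_algebra)"
  by (metis cscale_of_real of_real_1 scaleR_one)

lemma cscale_zero_right[simp]: "cscale c 0 = (0::'a::cstar_algebra)"
  by (metis add_cancel_right_right cscale_add_right)

lemma cscale_sum_right: "cscale c (sum f A) = sum (\<lambda>i. cscale c (f i)) A" for f :: "'b \<Rightarrow> 'a::cstar_algebra"
  by (induction A rule: infinite_finite_induct) (auto simp: cscale_add_right)

lemma cscale_sum_left: "cscale (sum f A) x = sum (\<lambda>i. cscale (f i) x) A" for x :: "'a::cstar_algebra"
  by (induction A rule: infinite_finite_induct) (auto simp: cscale_add_left)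

lemma cscale_minus_right: "cscale c (- x) = - cscale c (x::'a::cstar_algebra)"
  by (metis add_eq_0_iff2 cscale_add_right cscale_zero_right neg_eq_iff_add_eq_0)

lemma cscale_diff_right: "cscale c (x - y) = cscale c x - cscale c (y::'a::cstar_algebra)"
  by (metis cscale_add_right cscale_minus_right diff_conv_add_uminus)

lemma cscale_diff_left: "cscale (c - d) x = cscale c x - cscale d (x::'a::cstar_algebra)"
  by (metis add_diff_cancel cscale_add_left diff_add_cancel eq_diff_eq)

lemma cscale_scaleR: "cscale c (r *\<^sub>R x) = r *\<^sub>R cscale c (x::'a::cstar_algebra)"
  by (metis cscale_cscale cscale_of_real mult.commute)

lemma cscale_cscale': "cscale a (cscale b x) = cscale b (cscale a (x::'a::cstar_algebra))"
  by (metis cscale_cscale mult.commute)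

lemma norm_adj_le: "norm (adj x) \<le> norm (x::'a::cstar_algebra)"
proof (cases "adj x = 0")
  case True then show ?thesis by simp
next
  case False
  have "(norm (adj x))\<^sup>2 = norm (adj (adj x) * adj x)" by (rule cstar_identity[symmetric])
  also have "\<dots> \<le> norm x * norm (adj x)" by (simp add: adj_adj norm_mult_ineq)
  finally have "norm (adj x) * norm (adj x) \<le> norm x * norm (adj x)" by (simp add: power2_eq_square)
  then show ?thesis using False by simp
qed

lemma norm_adj[simp]: "norm (adj x) = norm (x::'a::cstar_algebra)"
  by (metis antisym norm_adj_le adj_adj)

lemma bounded_linear_adj: "bounded_linear (adj :: 'a::cstar_algebra \<Rightarrow> 'a)"
proof
  fix x y :: 'a and r :: real
  show "adj (x + y) = adj x + adj y" by (rule adj_add)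
  show "adj (r *\<^sub>R x) = r *\<^sub>R adj x"
    by (metis adj_cscale cscale_of_real complex_cnj_complex_of_real)
  show "\<exists>K. \<forall>x::'a. norm (adj x) \<le> norm x * K" by (rule exI[of _ 1]) simp
qed

lemma bounded_linear_cscale: "bounded_linear (cscale c :: 'a::cstar_algebra \<Rightarrow> 'a)"
proof
  fix x y :: 'a and r :: real
  show "cscale c (x + y) = cscale c x + cscale c y" by (rule cscale_add_right)
  show "cscale c (r *\<^sub>R x) = r *\<^sub>R cscale c x" by (rule cscale_scaleR)
  show "\<exists>K. \<forall>x::'a. norm (cscale c x) \<le> norm x * K" by (rule exI[of _ "cmod c"]) (simp add: norm_cscale)
qed

lemma bounded_linear_cscale_one: "bounded_linear (\<lambda>c. cscale c (1::'a::cstar_algebra))"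
proof
  fix x y :: complex and r :: real
  show "cscale (x + y) (1::'a) = cscale x 1 + cscale y 1" by (rule cscale_add_left)
  show "cscale (r *\<^sub>R x) (1::'a) = r *\<^sub>R cscale x 1"
    by (metis cscale_cscale cscale_of_real scaleR_conv_of_real)
  show "\<exists>K. \<forall>x. norm (cscale x (1::'a)) \<le> norm x * K" by (rule exI[of _ 1]) (simp add: norm_cscale)
qed

lemma closed_scalars: "closed (range (\<lambda>c. cscale c (1::'a::cstar_algebra)))"
proof -
  have "complete ((\<lambda>c. cscale c (1::'a)) ` UNIV)"
    by (rule complete_isometric_image[of 1]) (auto simp: bounded_linear_cscale_one norm_cscale complete_UNIV)
  then show ?thesis using complete_eq_closed by blast
qed

lemma norm_unitary_le: "adj v * v = 1 \<Longrightarrow> norm (v::'a::cstar_algebra) \<le> 1"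
  by (metis cstar_identity norm_one norm_ge_zero power2_eq_square power_one_right abs_le_square_iff
        abs_of_nonneg order_refl power_one)

lemma norm_mult_le1: "norm x \<le> 1 \<Longrightarrow> norm y \<le> 1 \<Longrightarrow> norm (x * y :: 'a::cstar_algebra) \<le> 1"
proof -
  assume a: "norm x \<le> 1" "norm y \<le> 1"
  have "norm (x * y) \<le> norm x * norm y" by (rule norm_mult_ineq)
  also have "\<dots> \<le> 1" using a by (simp add: mult_le_one)
  finally show ?thesis .
qed

lemma norm_proj_le: "adj q = q \<Longrightarrow> q * q = q \<Longrightarrow> norm (q::'a::cstar_algebra) \<le> 1"
proof -
  assume a: "adj q = q" "q * q = q"
  have "(norm q)\<^sup>2 = norm q" using cstar_identity[of q] a by simp
  then have "norm q * (norm q - 1) = 0" by (simp add: power2_eq_square algebra_simps)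
  then show ?thesis by auto
qed


locale q2 =
  fixes u s :: "'a::cstar_algebra"
  assumes rel: "Q2_relations u s"
begin

lemma uu1: "adj u * u = 1" and uu2: "u * adj u = 1" and ss: "adj s * s = 1"
  and su: "s * u = u ^ 2 * s" and cuntz: "s * adj s + u * s * adj s * adj u = 1"
  using rel by (auto simp: Q2_relations_def)

definition U :: "int \<Rightarrow> 'a" where "U m = upow u m"
definition S :: "nat \<Rightarrow> 'a" where "S n = s ^ n"
definition Sa :: "nat \<Rightarrow> 'a" where "Sa n = adj s ^ n"
definition Q :: "nat \<Rightarrow> int \<Rightarrow> 'a" where "Q n j = U j * S n * Sa n * U (- j)"

lemma U0[simp]: "U 0 = 1" by (simp add: U_def upow_def)
lemma U1: "U 1 = u" by (simp add: U_def upow_def)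

lemma U_succ: "U (m + 1) = U m * u"
proof (cases "m \<ge> 0")
  case True then show ?thesis
    by (simp add: U_def upow_def nat_add_distrib power_Suc2 power_commutes)
next
  case False
  then obtain p where p: "m = - int (Suc p)" by (metis int_cases le_refl neg_0_le_iff_le of_nat_0_le_iff)
  have n1: "nat (- m) = Suc p" using p by simp
  have n2: "nat (- (m + 1)) = p" using p by simp
  have "U m = adj u ^ Suc p" using False n1 by (simp add: U_def upow_def)
  moreover have "U (m+1) = adj u ^ p" using p n2 by (simp add: U_def upow_def)
  ultimately show ?thesis by (simp only: power_Suc2 mult.assoc uu1 mult_1_right)
qed

lemma U_pred: "U (m - 1) = U m * adj u"
proof -
  have "U m * adj u = U (m - 1) * u * adj u" using U_succ[of "m - 1"] by simp
  then show ?thesis by (simp add: mult.assoc uu2)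
qed

lemma U_add: "U (m + k) = U m * U k"
proof (induction k rule: int_induct[where k = 0])
  case base then show ?case by simp
next
  case (step1 i)
  have "U (m + (i + 1)) = U (m + i) * u" using U_succ[of "m + i"] by (simp add: add.assoc)
  also have "\<dots> = U m * U (i + 1)" using step1 U_succ[of i] by (simp add: mult.assoc)
  finally show ?case .
next
  case (step2 i)
  have "U (m + (i - 1)) = U (m + i) * adj u" using U_pred[of "m + i"] by (simp add: algebra_simps)
  also have "\<dots> = U m * U (i - 1)" using step2 U_pred[of i] by (simp add: mult.assoc)
  finally show ?case .
qed

lemma adj_U: "adj (U m) = U (- m)"
  by (cases "m \<ge> 0") (auto simp: U_def upow_def adj_power adj_adj)

lemma U_inv1: "U m * U (- m) = 1" and U_inv2: "U (- m) * U m = 1"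
  by (simp_all flip: U_add)

lemma U_unit: "adj (U m) * U m = 1" by (simp add: adj_U U_inv2)
lemma norm_U: "norm (U m) \<le> 1" by (rule norm_unitary_le[OF U_unit])

lemma sadju2: "adj u ^ 2 * s = s * adj u"
proof -
  have "adj u ^ 2 * (s * u) * adj u = adj u ^ 2 * (u ^ 2 * s) * adj u" by (simp add: su)
  moreover have "adj u ^ 2 * u ^ 2 = 1"
    by (simp add: power2_eq_square mult.assoc) (metis mult.assoc uu1 mult_1_left)
  ultimately show ?thesis
    by (metis mult.assoc mult_1_left mult_1_right uu2)
qed

lemma s_U: "s * U m = U (2 * m) * s"
proof (induction m rule: int_induct[where k = 0])
  case base then show ?case by simp
next
  case (step1 i)
  have "s * U (i + 1) = U (2 * i) * s * u" using step1 by (simp add: U_succ flip: mult.assoc)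
  also have "\<dots> = U (2 * i) * u ^ 2 * s" by (simp add: mult.assoc su)
  also have "\<dots> = U (2 * (i + 1)) * s"
  proof -
    have "U (2 * (i + 1)) = U (2 * i) * u * u" by (metis U_succ add.assoc one_add_one distrib_left mult.right_neutral)
    then show ?thesis by (simp add: power2_eq_square mult.assoc)
  qed
  finally show ?case .
next
  case (step2 i)
  have "s * U (i - 1) = U (2 * i) * s * adj u" using step2 by (simp add: U_pred flip: mult.assoc)
  also have "\<dots> = U (2 * i) * adj u ^ 2 * s" by (simp add: mult.assoc sadju2)
  also have "\<dots> = U (2 * (i - 1)) * s"
  proof -
    have "U (2 * (i - 1)) = U (2 * i - 1 - 1)" by (simp add: algebra_simps)
    also have "\<dots> = U (2 * i) * adj u * adj u" by (simp only: U_pred)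
    finally show ?thesis by (simp add: power2_eq_square mult.assoc)
  qed
  finally show ?case .
qed

lemma S0[simp]: "S 0 = 1" and Sa0[simp]: "Sa 0 = 1" by (simp_all add: S_def Sa_def)
lemma S_Suc: "S (Suc n) = s * S n" by (simp add: S_def)
lemma Sa_Suc: "Sa (Suc n) = Sa n * adj s" by (simp add: Sa_def power_Suc2 del: power_Suc)
lemma S_Suc': "S (Suc n) = S n * s" by (simp add: S_def power_Suc2 del: power_Suc)
lemma Sa_Suc': "Sa (Suc n) = adj s * Sa n" by (simp add: Sa_def)
lemma S_add: "S (a + b) = S a * S b" and Sa_add: "Sa (a + b) = Sa a * Sa b"
  by (simp_all add: S_def Sa_def power_add)
lemma adj_S: "adj (S n) = Sa n" and adj_Sa: "adj (Sa n) = S n"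
  by (simp_all add: S_def Sa_def adj_power adj_adj)

lemma Sa_S: "Sa n * S n = 1"
proof (induction n)
  case (Suc n)
  have "Sa (Suc n) * S (Suc n) = Sa n * (adj s * s) * S n" by (simp add: Sa_Suc S_Suc mult.assoc)
  then show ?case using Suc by (simp add: ss)
qed simp

lemma norm_S: "norm (S n) \<le> 1" by (rule norm_unitary_le) (simp add: adj_S Sa_S)
lemma norm_Sa: "norm (Sa n) \<le> 1" using norm_S[of n] by (metis adj_S norm_adj)

lemma S_U: "S n * U m = U (2 ^ n * m) * S n"
proof (induction n arbitrary: m)
  case (Suc n)
  have "S (Suc n) * U m = S n * (s * U m)" by (simp add: S_Suc' mult.assoc)
  also have "\<dots> = U (2 ^ n * (2 * m)) * S n * s" by (simp add: s_U Suc flip: mult.assoc)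
  finally show ?case by (simp add: S_Suc' mult.assoc mult_ac)
qed simp

lemma U_Sa: "U m * Sa n = Sa n * U (2 ^ n * m)"
proof -
  have "adj (S n * U (- m)) = adj (U (2 ^ n * (- m)) * S n)" by (simp add: S_U)
  then show ?thesis by (simp add: adj_mult adj_S adj_U)
qed

lemma sus: "adj s * u * s = 0"
proof -
  define P where "P = s * adj s"
  define R where "R = u * P * adj u"
  have PR: "P + R = 1" using cuntz by (simp add: P_def R_def mult.assoc)
  have PP: "P * P = P" by (simp add: P_def mult.assoc) (metis mult.assoc ss mult_1_right)
  have PR0: "P * R = 0"
  proof -
    have "P * (P + R) = P" using PR by simp
    then show ?thesis using PP by (simp add: distrib_left)
  qed
  have "adj s * u * s = adj s * P * (u * s)" by (simp add: P_def mult.assoc) (metis mult.assoc ss mult_1_left)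
  also have "u * s = R * (u * s)" by (simp add: R_def P_def mult.assoc) (metis mult.assoc ss mult_1_right uu1 mult_1_left)
  finally have "adj s * u * s = adj s * (P * R) * (u * s)" by (simp only: mult.assoc)
  then show ?thesis by (simp add: PR0)
qed

lemma sa_U_s: "adj s * U m * s = (if even m then U (m div 2) else 0)"
proof (cases "even m")
  case True
  then obtain i where "m = 2 * i" by auto
  then show ?thesis by (simp add: mult.assoc flip: s_U) (simp add: ss flip: mult.assoc)
next
  case False
  then obtain i where i: "m = 1 + 2 * i" by (metis oddE add.commute)
  have "adj s * U m * s = adj s * u * (U (2 * i) * s)" by (simp add: i U_add U1 mult.assoc)
  also have "\<dots> = adj s * u * s * U i" by (simp add: mult.assoc flip: s_U)
  finally show ?thesis using False sus by simp
qed

lemma Sa_U_S: "Sa n * U m * S n = (if 2 ^ n dvd m then U (m div 2 ^ n) else 0)"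
proof (induction n arbitrary: m)
  case (Suc n)
  have "Sa (Suc n) * U m * S (Suc n) = Sa n * (adj s * U m * s) * S n"
    by (simp add: Sa_Suc S_Suc mult.assoc)
  also have "\<dots> = (if even m then Sa n * U (m div 2) * S n else 0)" by (simp add: sa_U_s)
  also have "\<dots> = (if 2 ^ Suc n dvd m then U (m div 2 ^ Suc n) else 0)"
  proof (cases "even m")
    case True
    then obtain i where i: "m = 2 * i" by auto
    have "(2::int) ^ Suc n dvd 2 * i \<longleftrightarrow> 2 ^ n dvd i" by simp
    moreover have "2 * i div 2 ^ Suc n = i div 2 ^ n"
      by (simp add: div_mult_mult1)
    ultimately show ?thesis using Suc i by simp
  next
    case False
    then have "\<not> (2::int) ^ Suc n dvd m" by (metis dvd_power dvd_trans zero_less_Suc)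
    then show ?thesis using False by simp
  qed
  finally show ?case .
qed simp


lemma adj_Q: "adj (Q n j) = Q n j"
  by (simp add: Q_def adj_mult adj_U adj_S adj_Sa mult.assoc)

lemma Q0[simp]: "Q 0 j = 1" by (simp add: Q_def U_inv1)

lemma Q_mult_gen: "Q n j * Q (n + c) t = (if 2 ^ n dvd (t - j) then Q (n + c) t else 0)"
proof -
  have "Q n j * Q (n + c) t = U j * S n * (Sa n * (U (- j) * U t) * S n) * S c * Sa (n + c) * U (- t)"
    by (simp add: Q_def S_add mult.assoc)
  also have "U (- j) * U t = U (t - j)" by (simp flip: U_add)
  finally have e: "Q n j * Q (n + c) t = U j * S n * (Sa n * U (t - j) * S n) * S c * Sa (n + c) * U (- t)" .
  show ?thesis
  proof (cases "2 ^ n dvd (t - j)")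
    case True
    have e2: "Q n j * Q (n + c) t = U j * S n * U ((t - j) div 2 ^ n) * S c * Sa (n + c) * U (- t)"
      using e True by (simp add: Sa_U_S)
    have "U j * S n * U ((t - j) div 2 ^ n) = U j * U (t - j) * S n"
      using True by (simp add: S_U mult.assoc)
    also have "U j * U (t - j) = U t" by (simp flip: U_add)
    finally have "Q n j * Q (n + c) t = U t * S n * S c * Sa (n + c) * U (- t)" using e2 by simp
    then show ?thesis using True by (simp add: Q_def S_add mult.assoc)
  next
    case False then show ?thesis using e by (simp add: Sa_U_S)
  qed
qed

lemma Q_mult: "Q n j * Q n t = (if 2 ^ n dvd (t - j) then Q n t else 0)"
  using Q_mult_gen[of n j 0 t] by simp

lemma Q_idem: "Q n j * Q n j = Q n j" by (simp add: Q_mult)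

lemma Q_cong: assumes "2 ^ n dvd (t - j)" shows "Q n j = Q n t"
proof -
  have a: "Q n j * Q n t = Q n t" using assms by (simp add: Q_mult)
  have "2 ^ n dvd (j - t)" using assms by (metis dvd_diff_commute)
  then have b: "Q n t * Q n j = Q n j" by (simp add: Q_mult)
  have "adj (Q n j * Q n t) = Q n t * Q n j" by (simp add: adj_mult adj_Q)
  then show ?thesis using a b by (simp add: adj_Q)
qed

lemma Q_orth: "\<not> 2 ^ n dvd (t - j) \<Longrightarrow> Q n j * Q n t = 0" by (simp add: Q_mult)

lemma norm_Q: "norm (Q n j) \<le> 1" by (rule norm_proj_le) (simp_all add: adj_Q Q_idem)

lemma U_Q: "U m * Q n j = Q n (j + m) * U m"
proof -
  have "U m * Q n j = U (m + j) * S n * Sa n * U (- j)" by (simp add: Q_def U_add mult.assoc)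
  moreover have "Q n (j + m) * U m = U (j + m) * S n * Sa n * (U (- (j + m)) * U m)" by (simp add: Q_def mult.assoc)
  moreover have "U (- (j + m)) * U m = U (- j)" by (simp flip: U_add)
  ultimately show ?thesis by (simp add: add.commute)
qed

lemma s_Q: "s * Q n j = Q (Suc n) (2 * j) * s"
proof -
  have "s * Q n j = U (2 * j) * (s * S n) * Sa n * U (- j)" by (simp add: Q_def s_U flip: mult.assoc)
  moreover have "Q (Suc n) (2 * j) * s = U (2 * j) * (s * S n) * Sa n * (adj s * U (- (2 * j)) * s)"
    by (simp add: Q_def S_Suc Sa_Suc mult.assoc)
  moreover have "adj s * U (2 * (- j)) * s = U (- j)"
  proof -
    have d: "(2 * (- j)) div 2 = - j" by (rule nonzero_mult_div_cancel_left) simp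
    have "even (2 * (- j))" by simp
    then show ?thesis by (simp only: sa_U_s d if_True)
  qed
  ultimately show ?thesis by simp
qed

lemma S_Q: "S a * Q n j = Q (n + a) (2 ^ a * j) * S a"
proof (induction a arbitrary: n j)
  case (Suc a)
  have "S (Suc a) * Q n j = S a * (s * Q n j)" by (simp add: S_Suc' mult.assoc)
  also have "\<dots> = Q (Suc n + a) (2 ^ a * (2 * j)) * S a * s" by (simp add: s_Q Suc flip: mult.assoc)
  finally show ?case by (simp add: S_Suc' mult.assoc mult_ac)
qed simp

lemma sa_Q: "adj s * Q (Suc n) j = (if even j then Q n (j div 2) * adj s else 0)"
proof -
  have e: "adj s * Q (Suc n) j = (adj s * U j * s) * S n * Sa n * adj s * U (- j)"
    by (simp add: Q_def S_Suc Sa_Suc mult.assoc)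
  show ?thesis
  proof (cases "even j")
    case True
    then obtain i where i: "j = 2 * i" by auto
    have a: "adj s * U (- j) = U (- i) * adj s" using U_Sa[of "- i" 1] i by (simp add: Sa_def)
    have "adj s * U j * s = U i" using i by (simp add: sa_U_s)
    then have "adj s * Q (Suc n) j = U i * S n * Sa n * (adj s * U (- j))" using e by (simp add: mult.assoc)
    also have "\<dots> = Q n (j div 2) * adj s" using a i by (simp add: Q_def mult.assoc)
    finally show ?thesis using True by simp
  next
    case False then show ?thesis using e by (simp add: sa_U_s)
  qed
qed

lemma Sa_Q: "Sa b * Q (n + b) j = (if 2 ^ b dvd j then Q n (j div 2 ^ b) * Sa b else 0)"
proof (induction b arbitrary: n j)
  case (Suc b)
  have "Sa (Suc b) * Q (n + Suc b) j = Sa b * (adj s * Q (Suc (n + b)) j)" by (simp add: Sa_Suc mult.assoc)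
  also have "\<dots> = (if even j then Sa b * Q (n + b) (j div 2) * adj s else 0)"
    by (simp add: sa_Q mult.assoc)
  also have "\<dots> = (if 2 ^ Suc b dvd j then Q n (j div 2 ^ Suc b) * Sa (Suc b) else 0)"
  proof (cases "even j")
    case True
    then obtain i where i: "j = 2 * i" by auto
    have "(2::int) ^ Suc b dvd 2 * i \<longleftrightarrow> 2 ^ b dvd i" by simp
    moreover have "2 * i div 2 ^ Suc b = i div 2 ^ b" by (simp add: div_mult_mult1)
    ultimately show ?thesis using Suc i by (simp add: Sa_Suc mult.assoc)
  next
    case False
    then have "\<not> (2::int) ^ Suc b dvd j" by (metis dvd_power dvd_trans zero_less_Suc)
    then show ?thesis using False by simp
  qed
  finally show ?case .
qed simp

lemma Q_refine: "Q n j = Q (Suc n) j + Q (Suc n) (j + 2 ^ n)"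
proof -
  have "Q n j = U j * S n * (s * adj s + u * s * adj s * adj u) * Sa n * U (- j)"
    by (simp add: Q_def cuntz)
  also have "\<dots> = U j * (S n * s) * (adj s * Sa n) * U (- j)
      + U j * (S n * U 1) * s * adj s * (U (- 1) * Sa n) * U (- j)"
    by (simp add: distrib_left distrib_right mult.assoc U1 adj_U[of 1, symmetric])
  also have "U j * (S n * s) * (adj s * Sa n) * U (- j) = Q (Suc n) j"
    by (simp add: Q_def S_Suc' Sa_Suc')
  also have "U j * (S n * U 1) * s * adj s * (U (- 1) * Sa n) * U (- j) = Q (Suc n) (j + 2 ^ n)"
  proof -
    have "U j * (S n * U 1) * s * adj s * (U (- 1) * Sa n) * U (- j)
        = (U j * U (2 ^ n)) * (S n * s) * (adj s * Sa n) * (U (- (2 ^ n)) * U (- j))"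
      by (simp add: S_U U_Sa mult.assoc)
    also have "\<dots> = Q (Suc n) (j + 2 ^ n)"
    proof -
      have "U (- (2 ^ n)) * U (- j) = U (- (2 ^ n) + - j)" by (simp only: U_add)
      also have "- (2 ^ n) + - j = - (j + 2 ^ n)" by simp
      finally have "U (- (2 ^ n)) * U (- j) = U (- (j + 2 ^ n))" .
      moreover have "U j * U (2 ^ n) = U (j + 2 ^ n)" by (simp only: U_add)
      ultimately show ?thesis by (simp add: Q_def S_Suc' Sa_Suc')
    qed
    finally show ?thesis .
  qed
  finally show ?thesis .
qed

lemma sum_lessThan_add: "sum f {..<n + m} = sum f {..<n} + sum (\<lambda>i. f (n + i)) {..<m}"
  for f :: "nat \<Rightarrow> 'b::comm_monoid_add"
  by (induction m) (simp_all add: add.assoc)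

lemma Q_sum: "(\<Sum>i<2 ^ n. Q n (int i)) = 1"
proof (induction n)
  case (Suc n)
  have "(\<Sum>i<2 ^ Suc n. Q (Suc n) (int i)) = (\<Sum>i<2 ^ n. Q (Suc n) (int i)) + (\<Sum>i<2 ^ n. Q (Suc n) (int (2 ^ n + i)))"
    using sum_lessThan_add[of "\<lambda>i. Q (Suc n) (int i)" "2 ^ n" "2 ^ n"] by (simp add: mult_2)
  also have "\<dots> = (\<Sum>i<2 ^ n. Q n (int i))"
    by (simp add: Q_refine[of n] sum.distrib add.commute)
  finally show ?case using Suc by simp
qed simp

definition W :: "int \<Rightarrow> nat \<Rightarrow> nat \<Rightarrow> int \<Rightarrow> 'a" where "W m a b k = U m * S a * Sa b * U k"

lemma W_Q: "W m a b k * Q (N + b) j =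
   (if 2 ^ b dvd (j + k) then Q (N + a) (m + 2 ^ a * ((j + k) div 2 ^ b)) * W m a b k else 0)"
proof -
  have "W m a b k * Q (N + b) j = U m * S a * (Sa b * Q (N + b) (j + k)) * U k"
    by (simp add: W_def U_Q mult.assoc)
  also have "\<dots> = (if 2 ^ b dvd (j + k) then U m * (S a * Q N ((j + k) div 2 ^ b)) * Sa b * U k else 0)"
    by (simp add: Sa_Q mult.assoc)
  also have "\<dots> = (if 2 ^ b dvd (j + k) then Q (N + a) (m + 2 ^ a * ((j + k) div 2 ^ b)) * W m a b k else 0)"
  proof -
    have "U m * (S a * Q N ((j + k) div 2 ^ b)) = (U m * Q (N + a) (2 ^ a * ((j + k) div 2 ^ b))) * S a"
      by (simp add: S_Q mult.assoc)
    also have "U m * Q (N + a) (2 ^ a * ((j + k) div 2 ^ b)) = Q (N + a) (m + 2 ^ a * ((j + k) div 2 ^ b)) * U m"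
      by (simp add: U_Q add.commute)
    finally show ?thesis by (simp add: W_def mult.assoc)
  qed
  finally show ?thesis .
qed

lemma norm_W: "norm (W m a b k) \<le> 1"
  unfolding W_def by (intro norm_mult_le1 norm_U norm_S norm_Sa)

lemma adj_W: "adj (W m a b k) = W (- k) b a (- m)"
  by (simp add: W_def adj_mult adj_U adj_S adj_Sa mult.assoc)


end

context q2 begin
lemma adj_scaleR: "adj (r *\<^sub>R x) = r *\<^sub>R adj x"
  by (metis adj_cscale cscale_of_real complex_cnj_complex_of_real)

lemma dvd_range_eq:
  fixes i j :: nat
  assumes "i < 2 ^ n" "j < 2 ^ n" "(2::int) ^ n dvd (int j - int i)"
  shows "i = j"
proof (rule ccontr)
  assume "i \<noteq> j"
  then have p: "0 < \<bar>int j - int i\<bar>" by simp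
  have "(2::int) ^ n dvd \<bar>int j - int i\<bar>" using assms(3) by simp
  then have "(2::int) ^ n \<le> \<bar>int j - int i\<bar>" using p zdvd_imp_le by blast
  moreover have "\<bar>int j - int i\<bar> < (2::int) ^ n"
  proof -
    have "int i < 2 ^ n" "int j < 2 ^ n" using assms(1,2) by (metis of_nat_less_iff of_nat_numeral of_nat_power)+
    then show ?thesis by arith
  qed
  ultimately show False by simp
qed

lemma Q_orth_nat: "i < 2 ^ n \<Longrightarrow> j < 2 ^ n \<Longrightarrow> i \<noteq> j \<Longrightarrow> Q n (int i) * Q n (int j) = 0"
  by (metis Q_orth dvd_range_eq)

lemma Q_orth_shift: "i < 2 ^ n \<Longrightarrow> j < 2 ^ n \<Longrightarrow> i \<noteq> j \<Longrightarrow> Q n (j0 + int i) * Q n (j0 + int j) = 0"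
  by (rule Q_orth) (metis add_diff_cancel_left dvd_range_eq)

definition G :: "'a \<Rightarrow> 'a \<Rightarrow> 'a" where "G q z = q * z * q + (1 - q) * z * (1 - q)"

lemma G_contr:
  assumes "adj q = q" "q * q = q"
  shows "norm (G q z) \<le> norm z"
proof -
  define V where "V = 1 - (q + q)"
  have VV: "V * V = 1" using assms(2) by (simp add: V_def algebra_simps)
  have aV: "adj V = V" using assms(1) by (simp add: V_def adj_diff adj_add)
  have nV: "norm V \<le> 1" by (rule norm_unitary_le) (simp add: aV VV)
  have "G q z + G q z = z + V * z * V" by (simp add: G_def V_def algebra_simps)
  then have "norm (G q z + G q z) \<le> norm z + norm (V * z * V)" by (metis norm_triangle_ineq)
  moreover have "norm (V * z * V) \<le> norm z"
  proof -
    have "norm (V * z * V) \<le> norm V * norm z * norm V"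
      by (metis norm_mult_ineq mult_right_mono norm_ge_zero order_trans)
    also have "\<dots> \<le> 1 * norm z * 1" using nV by (intro mult_mono) auto
    also have "\<dots> = norm z" by simp
    finally show ?thesis .
  qed
  moreover have "norm (G q z + G q z) = 2 * norm (G q z)"
  proof -
    have "G q z + G q z = 2 *\<^sub>R G q z" by (simp add: scaleR_2)
    then show ?thesis by simp
  qed
  ultimately show ?thesis by simp
qed

definition Phi :: "nat \<Rightarrow> 'a \<Rightarrow> 'a" where "Phi n y = (\<Sum>i<2 ^ n. Q n (int i) * y * Q n (int i))"
definition M :: "nat \<Rightarrow> 'a \<Rightarrow> 'a" where "M n y = (1 / 2 ^ n) *\<^sub>R (\<Sum>i<2 ^ n. U (int i) * y * U (- int i))"
definition Psi :: "nat \<Rightarrow> 'a \<Rightarrow> 'a" where "Psi n y = M n (Phi n y)"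

definition F :: "nat \<Rightarrow> nat set \<Rightarrow> 'a \<Rightarrow> 'a" where
  "F n J y = (\<Sum>i\<in>J. Q n (int i) * y * Q n (int i)) + (1 - (\<Sum>i\<in>J. Q n (int i))) * y * (1 - (\<Sum>i\<in>J. Q n (int i)))"

lemma F_contr: "finite J \<Longrightarrow> J \<subseteq> {..<2 ^ n} \<Longrightarrow> norm (F n J y) \<le> norm y"
proof (induction J rule: finite_induct)
  case empty then show ?case by (simp add: F_def)
next
  case (insert i J)
  define q where "q = Q n (int i)"
  define A where "A = (\<Sum>j\<in>J. Q n (int j) * y * Q n (int j))"
  define R where "R = (\<Sum>j\<in>J. Q n (int j))"
  have orth: "\<And>j. j \<in> J \<Longrightarrow> q * Q n (int j) = 0 \<and> Q n (int j) * q = 0"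
    using insert by (auto simp: q_def intro!: Q_orth_nat)
  have qA: "q * A = 0" unfolding A_def sum_distrib_left using orth by (simp add: mult.assoc[symmetric])
  have Aq: "A * q = 0" unfolding A_def sum_distrib_right using orth by (simp add: mult.assoc)
  have qR: "q * R = 0" unfolding R_def sum_distrib_left using orth by simp
  have Rq: "R * q = 0" unfolding R_def sum_distrib_right using orth by simp
  have qq: "q * q = q" by (simp add: q_def Q_idem)
  have e: "F n (insert i J) y = G q (F n J y)"
  proof -
    have "F n (insert i J) y = q * y * q + A + (1 - (q + R)) * y * (1 - (q + R))"
      using insert by (simp add: F_def q_def A_def R_def)
    moreover have "G q (F n J y) = q * (A + (1 - R) * y * (1 - R)) * q + (1 - q) * (A + (1 - R) * y * (1 - R)) * (1 - q)"
      by (simp add: G_def F_def A_def R_def)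
    moreover have "q * (A + (1 - R) * y * (1 - R)) * q = q * y * q"
    proof -
      have "q * (1 - R) = q" using qR by (simp add: algebra_simps)
      moreover have "(1 - R) * q = q" using Rq by (simp add: algebra_simps)
      moreover have "q * (A + (1 - R) * y * (1 - R)) * q = q * A * q + (q * (1 - R)) * y * ((1 - R) * q)"
        by (simp add: distrib_left distrib_right mult.assoc)
      ultimately show ?thesis using qA by simp
    qed
    moreover have "(1 - q) * (A + (1 - R) * y * (1 - R)) * (1 - q) = A + (1 - (q + R)) * y * (1 - (q + R))"
    proof -
      have a1: "(1 - q) * A = A" using qA by (simp add: algebra_simps)
      have a2: "A * (1 - q) = A" using Aq by (simp add: algebra_simps)
      have a3: "(1 - q) * (1 - R) = 1 - (q + R)" using qR by (simp add: algebra_simps)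
      have a4: "(1 - R) * (1 - q) = 1 - (q + R)" using Rq by (simp add: algebra_simps)
      have "(1 - q) * (A + (1 - R) * y * (1 - R)) * (1 - q) = (1 - q) * A * (1 - q) + ((1 - q) * (1 - R)) * y * ((1 - R) * (1 - q))"
        by (simp add: distrib_left distrib_right mult.assoc)
      also have "\<dots> = A + (1 - (q + R)) * y * (1 - (q + R))" using a1 a2 a3 a4 by simp
      finally show ?thesis .
    qed
    ultimately show ?thesis by (simp add: add.assoc)
  qed
  have "norm (G q (F n J y)) \<le> norm (F n J y)"
    by (rule G_contr) (simp_all add: q_def adj_Q Q_idem)
  then show ?case using e insert by simp
qed

lemma Phi_contr: "norm (Phi n y) \<le> norm y"
proof -
  have "F n {..<2 ^ n} y = Phi n y" by (simp add: F_def Phi_def Q_sum)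
  then show ?thesis using F_contr[of "{..<2 ^ n}" n y] by simp
qed

lemma norm_UyU: "norm (U i * y * U k) \<le> norm y"
proof -
  have "norm (U i * y * U k) \<le> norm (U i) * norm y * norm (U k)"
    by (metis norm_mult_ineq mult_right_mono norm_ge_zero order_trans)
  also have "\<dots> \<le> 1 * norm y * 1" using norm_U[of i] norm_U[of k] by (intro mult_mono) auto
  also have "\<dots> = norm y" by simp
  finally show ?thesis .
qed

lemma M_contr: "norm (M n y) \<le> norm y"
proof -
  have "norm (\<Sum>i<2 ^ n. U (int i) * y * U (- int i)) \<le> (\<Sum>i<(2::nat) ^ n. norm y)"
    by (rule order_trans[OF norm_sum sum_mono]) (rule norm_UyU)
  also have "\<dots> = 2 ^ n * norm y" by simp
  finally show ?thesis by (simp add: M_def divide_simps mult.commute)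
qed

lemma Psi_contr: "norm (Psi n y) \<le> norm y"
  unfolding Psi_def using M_contr Phi_contr order_trans by blast

lemma Phi_add: "Phi n (y + z) = Phi n y + Phi n z"
  by (simp add: Phi_def distrib_left distrib_right sum.distrib)
lemma M_add: "M n (y + z) = M n y + M n z"
  by (simp add: M_def distrib_left distrib_right sum.distrib scaleR_add_right)
lemma Psi_add: "Psi n (y + z) = Psi n y + Psi n z" by (simp add: Psi_def Phi_add M_add)
lemma Phi_cscale: "Phi n (cscale c y) = cscale c (Phi n y)"
  by (simp add: Phi_def cscale_sum_right cscale_mult_left cscale_mult_right)
lemma M_cscale: "M n (cscale c y) = cscale c (M n y)"
  by (simp add: M_def cscale_sum_right cscale_mult_left cscale_mult_right cscale_scaleR)
lemma Psi_cscale: "Psi n (cscale c y) = cscale c (Psi n y)" by (simp add: Psi_def Phi_cscale M_cscale)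
lemma Psi_diff: "Psi n (y - z) = Psi n y - Psi n z"
proof -
  have "Psi n (y - z) + Psi n z = Psi n y" by (metis Psi_add diff_add_cancel)
  then show ?thesis by (simp add: eq_diff_eq)
qed
lemma Psi_zero: "Psi n 0 = 0" using Psi_diff[of n 0 0] by simp
lemma Psi_sum: "Psi n (sum f A) = sum (\<lambda>i. Psi n (f i)) A"
  by (induction A rule: infinite_finite_induct) (simp_all add: Psi_zero Psi_add)

lemma Psi_adj: "Psi n (adj y) = adj (Psi n y)"
  by (simp add: Psi_def M_def Phi_def adj_scaleR adj_sum adj_mult adj_Q adj_U mult.assoc)

end

context q2 begin

lemma x_U_comm: assumes "x * u = u * x" shows "x * U m = U m * x"
proof -
  have xa: "x * adj u = adj u * x"
  proof -
    have "adj u * (u * x) * adj u = adj u * (x * u) * adj u" using assms by simp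
    then show ?thesis by (simp add: mult.assoc uu2) (simp add: uu1 flip: mult.assoc)
  qed
  show ?thesis
  proof (induction m rule: int_induct[where k = 0])
    case base then show ?case by simp
  next
    case (step1 i) then show ?case
      by (metis U_succ assms mult.assoc)
  next
    case (step2 i) then show ?case
      by (metis U_pred xa mult.assoc)
  qed
qed

lemma Psi_fix:
  assumes "x * u = u * x" "\<forall>n j. x * Q n j = Q n j * x"
  shows "Psi n x = x"
proof -
  have "Phi n x = (\<Sum>i<2 ^ n. x * (Q n (int i) * Q n (int i)))"
    unfolding Phi_def by (rule sum.cong) (simp, metis assms(2) mult.assoc)
  also have "\<dots> = x" by (simp add: Q_idem Q_sum flip: sum_distrib_left)
  finally have "Phi n x = x" .
  moreover have "M n x = x"
  proof -
    have "(\<Sum>i<2 ^ n. U (int i) * x * U (- int i)) = (\<Sum>i<(2::nat) ^ n. x)"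
      by (rule sum.cong) (simp_all add: x_U_comm[OF assms(1)] mult.assoc U_inv1 flip: x_U_comm[OF assms(1)])
    moreover have "(\<Sum>i<(2::nat) ^ n. x) = real (2 ^ n) *\<^sub>R x" by (simp only: sum_constant_scaleR card_lessThan)
    ultimately show ?thesis by (simp add: M_def)
  qed
  ultimately show ?thesis by (simp add: Psi_def)
qed

lemma uniq_fix:
  fixes i i' :: nat and m k :: int and a b n :: nat
  defines "t \<equiv> \<lambda>j::int. m + 2 ^ a * ((j + k) div 2 ^ b)"
  assumes ba: "b < a" and range: "i < 2 ^ n" "i' < 2 ^ n"
    and d1: "2 ^ b dvd (int i + k)" "2 ^ n dvd (t (int i) - int i)"
    and d2: "2 ^ b dvd (int i' + k)" "2 ^ n dvd (t (int i') - int i')"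
  shows "i = i'"
proof -
  obtain c where c: "a = b + c" "0 < c" using ba by (metis less_imp_add_positive)
  obtain p where p: "int i + k = 2 ^ b * p" using d1(1) by (metis dvdE)
  obtain p' where p': "int i' + k = 2 ^ b * p'" using d2(1) by (metis dvdE)
  have tp: "t (int i) = m + 2 ^ c * (2 ^ b * p)" using p by (simp add: t_def c power_add mult_ac)
  have tp': "t (int i') = m + 2 ^ c * (2 ^ b * p')" using p' by (simp add: t_def c power_add mult_ac)
  have "(t (int i) - int i) - (t (int i') - int i') = (2 ^ c - 1) * (int i - int i')"
    unfolding tp tp' p[symmetric] p'[symmetric] by (simp add: algebra_simps)
  moreover have "2 ^ n dvd (t (int i) - int i) - (t (int i') - int i')" using d1(2) d2(2) by (rule dvd_diff)
  ultimately have "(2::int) ^ n dvd (2 ^ c - 1) * (int i - int i')" by simp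
  moreover have "coprime ((2::int) ^ n) (2 ^ c - 1)" using c(2) by simp
  ultimately have "(2::int) ^ n dvd (int i - int i')" using coprime_dvd_mult_right_iff by blast
  then show ?thesis using range dvd_range_eq[of i' n i] by simp
qed

lemma Phi_offdiag:
  assumes ba: "b < a" and bn: "b \<le> n"
  shows "\<exists>j0 e. Phi n (W m a b k) = Q n j0 * e * Q n j0 \<and> norm e \<le> 1"
proof -
  obtain N where N: "n = N + b" using bn by (metis le_add_diff_inverse2)
  define w where "w = W m a b k"
  define t where "t = (\<lambda>j::int. m + 2 ^ a * ((j + k) div 2 ^ b))"
  define P where "P = (\<lambda>j::int. 2 ^ b dvd (j + k) \<and> 2 ^ n dvd (t j - j))"
  have zero: "Q n (int i) * w * Q n (int i) = 0" if "\<not> P (int i)" for i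
  proof (cases "2 ^ b dvd (int i + k)")
    case False
    then show ?thesis using W_Q[of m a b k N "int i"] by (simp add: N w_def mult.assoc)
  next
    case True
    then have nd: "\<not> 2 ^ n dvd (t (int i) - int i)" using that by (simp add: P_def)
    have "Q n (int i) * w * Q n (int i) = Q n (int i) * (w * Q (N + b) (int i))" by (simp add: N mult.assoc)
    also have "\<dots> = Q (N + b) (int i) * Q ((N + b) + (a - b)) (t (int i)) * w"
      using True ba by (simp add: W_Q w_def t_def N mult.assoc)
    also have "\<dots> = 0" using nd by (simp add: Q_mult_gen N)
    finally show ?thesis .
  qed
  show ?thesis
  proof (cases "\<exists>i0<2 ^ n. P (int i0)")
    case True
    then obtain i0 where i0: "i0 < 2 ^ n" "P (int i0)" by blast
    have "Phi n w = (\<Sum>i<2 ^ n. if i = i0 then Q n (int i0) * w * Q n (int i0) else 0)"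
      unfolding Phi_def
    proof (rule sum.cong)
      fix i assume "i \<in> {..<(2::nat) ^ n}"
      then have "i < 2 ^ n" by simp
      show "Q n (int i) * w * Q n (int i) = (if i = i0 then Q n (int i0) * w * Q n (int i0) else 0)"
      proof (cases "P (int i)")
        case True
        then have "i = i0" using i0 \<open>i < 2 ^ n\<close> ba unfolding P_def t_def
          by (intro uniq_fix[of b a i n i0 k m]) auto
        then show ?thesis by simp
      next
        case False then show ?thesis using zero i0 by auto
      qed
    qed simp
    also have "\<dots> = Q n (int i0) * w * Q n (int i0)" using i0 by simp
    finally show ?thesis using norm_W unfolding w_def by blast
  next
    case False
    then have "Phi n w = 0" unfolding Phi_def using zero by (intro sum.neutral) auto
    then show ?thesis unfolding w_def by (intro exI[of _ 0] exI[of _ "0::'a"]) simp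
  qed
qed

end

context q2 begin

lemma block_bound:
  assumes "\<forall>i<2 ^ n. norm (y i) \<le> 1"
  shows "(norm (\<Sum>i<2 ^ n. Q n (j0 + int i) * y i * Q n (j0 + int i)))\<^sup>2 \<le> 2 ^ n"
proof -
  define e where "e = (\<lambda>i. Q n (j0 + int i) * y i * Q n (j0 + int i))"
  define z where "z = (\<Sum>i<2 ^ n. e i)"
  have cross: "adj (e i) * e i' = 0" if "i < 2 ^ n" "i' < 2 ^ n" "i \<noteq> i'" for i i'
  proof -
    have "adj (e i) * e i' = Q n (j0 + int i) * adj (y i) * (Q n (j0 + int i) * Q n (j0 + int i')) * y i' * Q n (j0 + int i')"
      by (simp add: e_def adj_mult adj_Q mult.assoc)
    then show ?thesis using Q_orth_shift[OF that] by simp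
  qed
  have "adj z * z = (\<Sum>i<2 ^ n. \<Sum>i'<2 ^ n. adj (e i) * e i')"
    by (simp add: z_def adj_sum sum_distrib_left sum_distrib_right) (rule sum.swap)
  also have "\<dots> = (\<Sum>i<2 ^ n. adj (e i) * e i)"
  proof (rule sum.cong)
    fix i assume "i \<in> {..<(2::nat) ^ n}"
    then have "(\<Sum>i'<2 ^ n. adj (e i) * e i') = (\<Sum>i'<2 ^ n. if i' = i then adj (e i) * e i else 0)"
      using cross by (intro sum.cong) auto
    also have "\<dots> = adj (e i) * e i" using \<open>i \<in> _\<close> by simp
    finally show "(\<Sum>i'<2 ^ n. adj (e i) * e i') = adj (e i) * e i" .
  qed simp
  finally have "norm (adj z * z) \<le> (\<Sum>i<(2::nat) ^ n. norm (adj (e i) * e i))"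
    by (simp add: norm_sum)
  also have "\<dots> \<le> (\<Sum>i<(2::nat) ^ n. 1)"
  proof (rule sum_mono)
    fix i assume "i \<in> {..<(2::nat) ^ n}"
    then have "norm (e i) \<le> 1" unfolding e_def using assms by (intro norm_mult_le1 norm_Q) auto
    then have "(norm (e i))\<^sup>2 \<le> 1" by (simp add: power_le_one)
    then show "norm (adj (e i) * e i) \<le> 1" by (simp add: cstar_identity)
  qed
  finally show ?thesis by (simp add: z_def e_def cstar_identity)
qed

lemma Psi_offdiag:
  assumes ba: "b < a" and bn: "b \<le> n"
  shows "norm (Psi n (W m a b k)) \<le> inverse (sqrt 2 ^ n)"
proof -
  obtain j0 e where je: "Phi n (W m a b k) = Q n j0 * e * Q n j0" "norm e \<le> 1"
    using Phi_offdiag[OF assms] by blast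
  define z where "z = (\<Sum>i<2 ^ n. Q n (j0 + int i) * (U (int i) * e * U (- int i)) * Q n (j0 + int i))"
  have conj: "U (int i) * (Q n j0 * e * Q n j0) * U (- int i) = Q n (j0 + int i) * (U (int i) * e * U (- int i)) * Q n (j0 + int i)" for i
  proof -
    have a: "U (int i) * Q n j0 = Q n (j0 + int i) * U (int i)" by (rule U_Q)
    have b: "Q n j0 * U (- int i) = U (- int i) * Q n (j0 + int i)" using U_Q[of "- int i" n "j0 + int i"] by simp
    have "U (int i) * (Q n j0 * e * Q n j0) * U (- int i) = (U (int i) * Q n j0) * e * (Q n j0 * U (- int i))"
      by (simp add: mult.assoc)
    also have "\<dots> = Q n (j0 + int i) * (U (int i) * e * U (- int i)) * Q n (j0 + int i)"
      by (simp add: a b mult.assoc)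
    finally show ?thesis .
  qed
  have Pz: "Psi n (W m a b k) = (1 / 2 ^ n) *\<^sub>R z"
    by (simp add: Psi_def M_def je conj z_def)
  have "(norm z)\<^sup>2 \<le> 2 ^ n" unfolding z_def
    by (rule block_bound) (auto intro: order_trans[OF norm_UyU je(2)])
  then have "(norm (Psi n (W m a b k)))\<^sup>2 * (2 ^ n * 2 ^ n) \<le> 2 ^ n"
    by (simp add: Pz power_mult_distrib power2_eq_square field_simps)
  then have "(norm (Psi n (W m a b k)))\<^sup>2 \<le> 1 / 2 ^ n"
    by (simp add: field_simps)
  also have "(1::real) / 2 ^ n = (inverse (sqrt 2 ^ n))\<^sup>2"
  proof -
    have "(sqrt 2 ^ n)\<^sup>2 = (2::real) ^ n"
      by (metis power_mult mult.commute real_sqrt_pow2 zero_le_numeral)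
    then show ?thesis by (simp add: power_inverse divide_inverse)
  qed
  finally show ?thesis by (rule power2_le_imp_le) simp
qed

end

context q2 begin

lemma Phi_diag_zero:
  assumes an: "a \<le> n" and nd: "\<not> 2 ^ n dvd (m + k)"
  shows "Phi n (W m a a k) = 0"
  unfolding Phi_def
proof (rule sum.neutral, intro ballI)
  fix i assume "i \<in> {..<(2::nat) ^ n}"
  obtain N where N: "n = N + a" using an by (metis le_add_diff_inverse2)
  show "Q n (int i) * W m a a k * Q n (int i) = 0"
  proof (cases "2 ^ a dvd (int i + k)")
    case False
    then show ?thesis using W_Q[of m a a k N "int i"] by (simp add: N mult.assoc)
  next
    case True
    then have e: "2 ^ a * ((int i + k) div 2 ^ a) = int i + k" by simp
    have "Q n (int i) * W m a a k * Q n (int i) = Q n (int i) * Q n (m + (int i + k)) * W m a a k"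
      using W_Q[of m a a k N "int i"] True by (simp add: N e mult.assoc)
    also have "\<dots> = 0" using nd by (simp add: Q_mult)
    finally show ?thesis .
  qed
qed

lemma Phi_Q: assumes "a \<le> n" shows "Phi n (Q a m) = Q a m"
proof -
  obtain c where c: "n = a + c" using assms by (metis le_add_diff_inverse)
  have t: "Q n (int i) * Q a m * Q n (int i) = Q n (int i) * Q a m" for i
  proof -
    have l: "Q a m * Q n (int i) = (if 2 ^ a dvd (int i - m) then Q n (int i) else 0)"
      using Q_mult_gen[of a m c "int i"] by (simp add: c)
    have r: "Q n (int i) * Q a m = (if 2 ^ a dvd (int i - m) then Q n (int i) else 0)"
    proof -
      have "Q n (int i) * Q a m = adj (Q a m * Q n (int i))" by (simp add: adj_mult adj_Q)
      then show ?thesis using l by (simp add: adj_Q)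
    qed
    show ?thesis using l r by (simp add: mult.assoc Q_idem)
  qed
  have "Phi n (Q a m) = (\<Sum>i<2 ^ n. Q n (int i)) * Q a m"
    by (simp add: Phi_def t sum_distrib_right)
  then show ?thesis by (simp add: Q_sum)
qed

lemma Q_sum_pow: "(\<Sum>i<2 ^ (a + d). Q a (int i)) = (2 ^ d :: real) *\<^sub>R 1"
proof (induction d)
  case 0 then show ?case by (simp add: Q_sum)
next
  case (Suc d)
  have "(\<Sum>i<2 ^ (a + Suc d). Q a (int i)) = (\<Sum>i<2 ^ (a + d). Q a (int i)) + (\<Sum>i<2 ^ (a + d). Q a (int (2 ^ (a + d) + i)))"
    using sum_lessThan_add[of "\<lambda>i. Q a (int i)" "2 ^ (a + d)" "2 ^ (a + d)"] by (simp add: mult_2)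
  also have "(\<Sum>i<2 ^ (a + d). Q a (int (2 ^ (a + d) + i))) = (\<Sum>i<2 ^ (a + d). Q a (int i))"
  proof (rule sum.cong)
    fix i :: nat
    have "(2::int) ^ a dvd 2 ^ (a + d)" by (simp add: power_add)
    then have "(2::int) ^ a dvd (int (2 ^ (a + d) + i) - int i)" by simp
    then show "Q a (int (2 ^ (a + d) + i)) = Q a (int i)" by (metis Q_cong)
  qed simp
  finally show ?case using Suc by (simp add: scaleR_2 flip: scaleR_add_left)
qed

lemma Q_shift_sum: "(\<Sum>i<2 ^ (a + d). Q a (m + int i)) = (\<Sum>i<2 ^ (a + d). Q a (int i))"
proof -
  define N :: nat where "N = 2 ^ (a + d)"
  have step: "(\<Sum>i<N. Q a (m + 1 + int i)) = (\<Sum>i<N. Q a (m + int i))" for m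
  proof -
    define f where "f = (\<lambda>i::nat. Q a (m + int i))"
    have "f N = f 0"
    proof -
      have "(2::int) ^ a dvd 2 ^ (a + d)" by (simp add: power_add)
      then have "(2::int) ^ a dvd (m + int N - m)" by (simp add: N_def)
      then show ?thesis by (simp add: f_def Q_cong[symmetric])
    qed
    moreover have "(\<Sum>i<Suc N. f i) = f 0 + (\<Sum>i<N. f (Suc i))" by (rule sum.lessThan_Suc_shift)
    moreover have "(\<Sum>i<Suc N. f i) = (\<Sum>i<N. f i) + f N" by simp
    ultimately have "(\<Sum>i<N. f (Suc i)) = (\<Sum>i<N. f i)" by (simp add: add.commute)
    then show ?thesis by (simp add: f_def ac_simps)
  qed
  have "(\<Sum>i<N. Q a (m + int i)) = (\<Sum>i<N. Q a (int i))"
  proof (induction m rule: int_induct[where k = 0])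
    case base then show ?case by simp
  next
    case (step1 i) then show ?case using step[of i] by simp
  next
    case (step2 i) then show ?case using step[of "i - 1"] by simp
  qed
  then show ?thesis by (simp add: N_def)
qed

lemma M_Q: assumes "a \<le> n" shows "M n (Q a m) = (1 / 2 ^ a :: real) *\<^sub>R 1"
proof -
  obtain d where d: "n = a + d" using assms by (metis le_add_diff_inverse)
  have "U (int i) * Q a m * U (- int i) = Q a (m + int i)" for i
    by (simp add: U_Q mult.assoc U_inv1)
  then have "M n (Q a m) = (1 / 2 ^ n) *\<^sub>R (\<Sum>i<2 ^ (a + d). Q a (m + int i))"
    by (simp add: M_def d)
  also have "\<dots> = (1 / 2 ^ n * 2 ^ d :: real) *\<^sub>R 1" by (simp add: Q_shift_sum Q_sum_pow)
  also have "(1 / 2 ^ n * 2 ^ d :: real) = 1 / 2 ^ a" by (simp add: d power_add)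
  finally show ?thesis .
qed

end

context q2 begin

lemma M_zero: "M n 0 = 0" by (simp add: M_def)

lemma word_lim: "\<exists>\<gamma>. (\<lambda>n. Psi n (W m a b k)) \<longlonglongrightarrow> cscale \<gamma> 1"
proof (cases "a = b")
  case True
  show ?thesis
  proof (cases "m + k = 0")
    case True
    then have k: "k = - m" by simp
    have WQ: "W m a b k = Q a m" using \<open>a = b\<close> k by (simp add: W_def Q_def)
    have "eventually (\<lambda>n. Psi n (W m a b k) = (1 / 2 ^ a :: real) *\<^sub>R 1) sequentially"
      using eventually_ge_at_top[of a]
      by eventually_elim (simp add: WQ Psi_def Phi_Q M_Q)
    then have "(\<lambda>n. Psi n (W m a b k)) \<longlonglongrightarrow> (1 / 2 ^ a :: real) *\<^sub>R 1" by (rule tendsto_eventually)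
    then show ?thesis using cscale_of_real[of "1 / 2 ^ a" "1::'a"] by metis
  next
    case False
    have "eventually (\<lambda>n. Psi n (W m a b k) = cscale 0 1) sequentially"
      using eventually_ge_at_top[of "a + nat \<bar>m + k\<bar>"]
    proof eventually_elim
      case (elim n)
      have "\<not> 2 ^ n dvd (m + k)"
      proof
        assume "2 ^ n dvd (m + k)"
        then have "(2::int) ^ n dvd \<bar>m + k\<bar>" by simp
        then have "(2::int) ^ n \<le> \<bar>m + k\<bar>" using False zdvd_imp_le by fastforce
        moreover have "\<bar>m + k\<bar> \<le> int n" using elim by linarith
        moreover have "int n < 2 ^ n" using less_exp[of n] by (metis of_nat_less_iff of_nat_numeral of_nat_power)
        ultimately show False by simp
      qed
      then show ?case using elim \<open>a = b\<close> by (simp add: Psi_def Phi_diag_zero M_zero)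
    qed
    then show ?thesis by (blast intro: tendsto_eventually)
  qed
next
  case False
  have g: "(\<lambda>n. inverse (sqrt 2 ^ n)) \<longlonglongrightarrow> 0" by (rule LIMSEQ_inverse_realpow_zero) simp
  have "eventually (\<lambda>n. norm (Psi n (W m a b k)) \<le> inverse (sqrt 2 ^ n)) sequentially"
  proof (cases "b < a")
    case True
    show ?thesis using eventually_ge_at_top[of b]
      by eventually_elim (rule Psi_offdiag[OF True])
  next
    case c: False
    then have ab: "a < b" using False by simp
    show ?thesis using eventually_ge_at_top[of a]
    proof eventually_elim
      case (elim n)
      have "norm (Psi n (W m a b k)) = norm (Psi n (adj (W m a b k)))" by (simp add: Psi_adj)
      also have "\<dots> = norm (Psi n (W (- k) b a (- m)))" by (simp add: adj_W)
      also have "\<dots> \<le> inverse (sqrt 2 ^ n)" by (rule Psi_offdiag[OF ab elim])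
      finally show ?case .
    qed
  qed
  then have "(\<lambda>n. Psi n (W m a b k)) \<longlonglongrightarrow> 0" using g by (rule Lim_null_comparison)
  then show ?thesis by (intro exI[of _ 0]) simp
qed

lemma W_prod: "W m a b k * W m' a' b' k' = 0 \<or> (\<exists>m'' a'' b'' k''. W m a b k * W m' a' b' k' = W m'' a'' b'' k'')"
proof -
  define j where "j = k + m'"
  have e: "W m a b k * W m' a' b' k' = U m * S a * (Sa b * U j * S a') * Sa b' * U k'"
    by (simp add: W_def j_def U_add mult.assoc)
  show ?thesis
  proof (cases "b \<le> a'")
    case True
    then obtain c where c: "a' = b + c" by (metis le_add_diff_inverse)
    have "Sa b * U j * S a' = (Sa b * U j * S b) * S c" by (simp add: c S_add mult.assoc)
    also have "\<dots> = (if 2 ^ b dvd j then U (j div 2 ^ b) * S c else 0)" by (simp add: Sa_U_S)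
    finally have f: "Sa b * U j * S a' = (if 2 ^ b dvd j then U (j div 2 ^ b) * S c else 0)" .
    show ?thesis
    proof (cases "2 ^ b dvd j")
      case True
      have "W m a b k * W m' a' b' k' = U m * S a * (U (j div 2 ^ b) * S c) * Sa b' * U k'"
        using e f True by simp
      also have "\<dots> = U m * (S a * U (j div 2 ^ b)) * S c * Sa b' * U k'" by (simp only: mult.assoc)
      also have "\<dots> = W (m + 2 ^ a * (j div 2 ^ b)) (a + c) b' k'"
        by (simp add: S_U W_def U_add S_add mult.assoc)
      finally show ?thesis by blast
    next
      case False then show ?thesis using e f by simp
    qed
  next
    case False
    then obtain c where c: "b = c + a'" by (metis le_add_diff_inverse2 nat_le_linear)
    have "Sa b * U j * S a' = Sa c * (Sa a' * U j * S a')" by (simp add: c Sa_add mult.assoc)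
    also have "\<dots> = (if 2 ^ a' dvd j then Sa c * U (j div 2 ^ a') else 0)" by (simp add: Sa_U_S)
    finally have f: "Sa b * U j * S a' = (if 2 ^ a' dvd j then Sa c * U (j div 2 ^ a') else 0)" .
    show ?thesis
    proof (cases "2 ^ a' dvd j")
      case True
      have "W m a b k * W m' a' b' k' = U m * S a * (Sa c * U (j div 2 ^ a')) * Sa b' * U k'"
        using e f True by simp
      also have "\<dots> = U m * S a * Sa c * (U (j div 2 ^ a') * Sa b') * U k'" by (simp only: mult.assoc)
      also have "\<dots> = W m a (c + b') (2 ^ b' * (j div 2 ^ a') + k')"
        by (simp add: U_Sa W_def U_add Sa_add mult.assoc)
      finally show ?thesis by blast
    next
      case False then show ?thesis using e f by simp
    qed
  qed
qed

end

lemma cspanI: "finite F \<Longrightarrow> F \<subseteq> S \<Longrightarrow> (\<Sum>v\<in>F. cscale (c v) v) \<in> cspan S"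
  unfolding cspan_def by blast

lemma cspan_zero: "0 \<in> cspan S"
  using cspanI[of "{}" S "\<lambda>_. 0"] by simp

lemma cspan_mem: "x \<in> S \<Longrightarrow> x \<in> cspan S"
  using cspanI[of "{x}" S "\<lambda>_. 1"] by simp

lemma cspan_add: assumes "x \<in> cspan S" "y \<in> cspan S" shows "x + y \<in> cspan S"
proof -
  obtain F c where F: "x = (\<Sum>v\<in>F. cscale (c v) v)" "finite F" "F \<subseteq> S" using assms(1) unfolding cspan_def by blast
  obtain G d where G: "y = (\<Sum>v\<in>G. cscale (d v) v)" "finite G" "G \<subseteq> S" using assms(2) unfolding cspan_def by blast
  define c' where "c' = (\<lambda>v. if v \<in> F then c v else 0)"
  define d' where "d' = (\<lambda>v. if v \<in> G then d v else 0)"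
  have "x = (\<Sum>v\<in>F \<union> G. cscale (c' v) v)"
    unfolding F(1) c'_def using F G by (intro sum.mono_neutral_cong_left) auto
  moreover have "y = (\<Sum>v\<in>F \<union> G. cscale (d' v) v)"
    unfolding G(1) d'_def using F G by (intro sum.mono_neutral_cong_left) auto
  ultimately have "x + y = (\<Sum>v\<in>F \<union> G. cscale (c' v + d' v) v)"
    by (simp add: cscale_add_left sum.distrib)
  then show ?thesis using F G cspanI[of "F \<union> G" S "\<lambda>v. c' v + d' v"] by simp
qed

lemma cspan_scale: assumes "x \<in> cspan S" shows "cscale a x \<in> cspan S"
proof -
  obtain F c where F: "x = (\<Sum>v\<in>F. cscale (c v) v)" "finite F" "F \<subseteq> S" using assms(1) unfolding cspan_def by blast
  have "cscale a x = (\<Sum>v\<in>F. cscale (a * c v) v)" by (simp add: F(1) cscale_sum_right cscale_cscale)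
  then show ?thesis using F cspanI[of F S "\<lambda>v. a * c v"] by simp
qed

lemma cspan_sum: "finite A \<Longrightarrow> (\<And>i. i \<in> A \<Longrightarrow> f i \<in> cspan S) \<Longrightarrow> sum f A \<in> cspan S"
  by (induction A rule: finite_induct) (auto intro: cspan_zero cspan_add)

lemma cspan_mult:
  assumes S: "\<And>v w. v \<in> S \<Longrightarrow> w \<in> S \<Longrightarrow> v * w \<in> cspan S"
    and x: "x \<in> cspan S" and y: "y \<in> cspan S"
  shows "x * y \<in> cspan S"
proof -
  obtain F c where F: "x = (\<Sum>v\<in>F. cscale (c v) v)" "finite F" "F \<subseteq> S" using x unfolding cspan_def by blast
  obtain G d where G: "y = (\<Sum>v\<in>G. cscale (d v) v)" "finite G" "G \<subseteq> S" using y unfolding cspan_def by blast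
  have "x * y = (\<Sum>v\<in>F. \<Sum>w\<in>G. cscale (c v) v * cscale (d w) w)"
    unfolding F(1) G(1) sum_distrib_right sum_distrib_left by (rule sum.swap)
  also have "\<dots> = (\<Sum>v\<in>F. \<Sum>w\<in>G. cscale (c v * d w) (v * w))"
    by (simp add: cscale_mult_left cscale_mult_right cscale_cscale mult.commute)
  also have "\<dots> \<in> cspan S" using F G S by (intro cspan_sum cspan_scale) auto
  finally show ?thesis .
qed

lemma cspan_adj:
  assumes S: "\<And>v. v \<in> S \<Longrightarrow> adj v \<in> S" and x: "x \<in> cspan S"
  shows "adj x \<in> cspan S"
proof -
  obtain F c where F: "x = (\<Sum>v\<in>F. cscale (c v) v)" "finite F" "F \<subseteq> S" using x unfolding cspan_def by blast
  have "adj x = (\<Sum>v\<in>F. cscale (cnj (c v)) (adj v))" by (simp add: F(1) adj_sum adj_cscale)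
  also have "\<dots> \<in> cspan S" using F S by (intro cspan_sum cspan_scale cspan_mem) auto
  finally show ?thesis .
qed

lemma closure_subalg:
  fixes S :: "'a::cstar_algebra set"
  assumes one: "1 \<in> cspan S"
    and mult: "\<And>v w. v \<in> S \<Longrightarrow> w \<in> S \<Longrightarrow> v * w \<in> cspan S"
    and adjS: "\<And>v. v \<in> S \<Longrightarrow> adj v \<in> S"
  shows "closed_star_subalgebra (closure (cspan S))"
  unfolding closed_star_subalgebra_def
proof (intro conjI ballI allI)
  show "closed (closure (cspan S))" by simp
  show "1 \<in> closure (cspan S)" using one closure_subset by blast
next
  fix x y assume "x \<in> closure (cspan S)" "y \<in> closure (cspan S)"
  then obtain X Y where X: "\<forall>n. X n \<in> cspan S" "X \<longlonglongrightarrow> x" and Y: "\<forall>n. Y n \<in> cspan S" "Y \<longlonglongrightarrow> y"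
    unfolding closure_sequential by blast
  have "(\<lambda>n. X n + Y n) \<longlonglongrightarrow> x + y" using X Y by (intro tendsto_add) auto
  moreover have "\<forall>n. X n + Y n \<in> cspan S" using X Y by (auto intro: cspan_add)
  ultimately show "x + y \<in> closure (cspan S)" unfolding closure_sequential by (intro exI[of _ "\<lambda>n. X n + Y n"]) auto
  have "(\<lambda>n. X n * Y n) \<longlonglongrightarrow> x * y" using X Y by (intro tendsto_mult) auto
  moreover have "\<forall>n. X n * Y n \<in> cspan S" using X Y by (auto intro: cspan_mult mult)
  ultimately show "x * y \<in> closure (cspan S)" unfolding closure_sequential by (intro exI[of _ "\<lambda>n. X n * Y n"]) auto
next
  fix x c assume "x \<in> closure (cspan S)"
  then obtain X where X: "\<forall>n. X n \<in> cspan S" "X \<longlonglongrightarrow> x" unfolding closure_sequential by blast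
  have "(\<lambda>n. cscale c (X n)) \<longlonglongrightarrow> cscale c x" using X by (intro bounded_linear.tendsto[OF bounded_linear_cscale]) auto
  moreover have "\<forall>n. cscale c (X n) \<in> cspan S" using X by (auto intro: cspan_scale)
  ultimately show "cscale c x \<in> closure (cspan S)" unfolding closure_sequential by (intro exI[of _ "\<lambda>n. cscale c (X n)"]) auto
next
  fix x assume "x \<in> closure (cspan S)"
  then obtain X where X: "\<forall>n. X n \<in> cspan S" "X \<longlonglongrightarrow> x" unfolding closure_sequential by blast
  have "(\<lambda>n. adj (X n)) \<longlonglongrightarrow> adj x" using X by (intro bounded_linear.tendsto[OF bounded_linear_adj]) auto
  moreover have "\<forall>n. adj (X n) \<in> cspan S" using X adjS by (auto intro: cspan_adj)
  ultimately show "adj x \<in> closure (cspan S)" unfolding closure_sequential by (intro exI[of _ "\<lambda>n. adj (X n)"]) auto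
qed

context q2 begin

definition WS :: "'a set" where "WS = {W m a b k | m a b k. True}"

lemma cspan_lim: assumes "d \<in> cspan WS" shows "\<exists>\<gamma>. (\<lambda>n. Psi n d) \<longlonglongrightarrow> cscale \<gamma> 1"
proof -
  obtain F c where F: "d = (\<Sum>v\<in>F. cscale (c v) v)" "finite F" "F \<subseteq> WS" using assms unfolding cspan_def by blast
  have "\<forall>v\<in>F. \<exists>\<gamma>. (\<lambda>n. Psi n v) \<longlonglongrightarrow> cscale \<gamma> 1" using F(3) word_lim unfolding WS_def by blast
  then obtain g where g: "\<And>v. v \<in> F \<Longrightarrow> (\<lambda>n. Psi n v) \<longlonglongrightarrow> cscale (g v) 1" by metis
  have "(\<lambda>n. \<Sum>v\<in>F. cscale (c v) (Psi n v)) \<longlonglongrightarrow> (\<Sum>v\<in>F. cscale (c v) (cscale (g v) 1))"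
    by (intro tendsto_sum bounded_linear.tendsto[OF bounded_linear_cscale] g)
  moreover have "(\<Sum>v\<in>F. cscale (c v) (cscale (g v) 1)) = cscale (\<Sum>v\<in>F. c v * g v) (1::'a)"
    by (simp add: cscale_cscale cscale_sum_left)
  moreover have "Psi n d = (\<Sum>v\<in>F. cscale (c v) (Psi n v))" for n by (simp add: F(1) Psi_sum Psi_cscale)
  ultimately show ?thesis by auto
qed

lemma closure_WS: assumes gen: "generates {u, s}" shows "closure (cspan WS) = UNIV"
proof -
  have one: "1 \<in> cspan WS" by (rule cspan_mem) (auto simp: WS_def W_def intro!: exI[of _ 0])
  have "closed_star_subalgebra (closure (cspan WS))"
  proof (rule closure_subalg[OF one])
    fix v w assume "v \<in> WS" "w \<in> WS"
    then obtain m a b k m' a' b' k' where vw: "v = W m a b k" "w = W m' a' b' k'" unfolding WS_def by blast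
    show "v * w \<in> cspan WS"
    proof (cases "v * w = 0")
      case True then show ?thesis by (simp add: cspan_zero)
    next
      case False
      then obtain m'' a'' b'' k'' where "v * w = W m'' a'' b'' k''" using W_prod vw by blast
      moreover have "W m'' a'' b'' k'' \<in> WS" unfolding WS_def by blast
      ultimately show ?thesis by (simp add: cspan_mem)
    qed
  next
    fix v assume "v \<in> WS"
    then obtain m a b k where "v = W m a b k" unfolding WS_def by blast
    then have "adj v = W (- k) b a (- m)" by (simp add: adj_W)
    then show "adj v \<in> WS" unfolding WS_def by blast
  qed
  moreover have "u \<in> closure (cspan WS)"
  proof -
    have "W 1 0 0 0 = u" by (simp add: W_def U1)
    moreover have "W 1 0 0 0 \<in> WS" unfolding WS_def by blast
    ultimately have "u \<in> WS" by simp
    then show ?thesis using cspan_mem closure_subset by blast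
  qed
  moreover have "s \<in> closure (cspan WS)"
  proof -
    have "W 0 1 0 0 = s" by (simp add: W_def S_def)
    moreover have "W 0 1 0 0 \<in> WS" unfolding WS_def by blast
    ultimately have "s \<in> WS" by simp
    then show ?thesis using cspan_mem closure_subset by blast
  qed
  ultimately show ?thesis using gen unfolding generates_def by blast
qed

lemma central_scalar:
  assumes gen: "generates {u, s}" and xu: "x * u = u * x" and xQ: "\<forall>n j. x * Q n j = Q n j * x"
  shows "\<exists>c. x = cscale c 1"
proof -
  have "x \<in> closure (range (\<lambda>c. cscale c (1::'a)))"
    unfolding closure_approachable
  proof (intro allI impI)
    fix e :: real assume e: "0 < e"
    have "x \<in> closure (cspan WS)" using closure_WS[OF gen] by simp
    then obtain d where d: "d \<in> cspan WS" "dist x d < e / 2" using e closure_approachableD[of x "cspan WS" "e/2"] by auto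
    obtain \<gamma> where g: "(\<lambda>n. Psi n d) \<longlonglongrightarrow> cscale \<gamma> 1" using cspan_lim[OF d(1)] by blast
    obtain n where n: "norm (Psi n d - cscale \<gamma> 1) < e / 2" using LIMSEQ_D[OF g, of "e/2"] e by auto
    have "norm (x - cscale \<gamma> 1) = norm (Psi n (x - d) + (Psi n d - cscale \<gamma> 1))"
      by (simp add: Psi_diff Psi_fix[OF xu xQ])
    also have "\<dots> \<le> norm (Psi n (x - d)) + norm (Psi n d - cscale \<gamma> 1)" by (rule norm_triangle_ineq)
    also have "\<dots> < e / 2 + e / 2" using Psi_contr[of n "x - d"] n d(2) by (simp add: dist_norm)
    finally have "dist (cscale \<gamma> 1) x < e" by (simp add: dist_norm norm_minus_commute)
    then show "\<exists>y\<in>range (\<lambda>c. cscale c (1::'a)). dist y x < e" by blast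
  qed
  moreover have "closure (range (\<lambda>c. cscale c (1::'a))) = range (\<lambda>c. cscale c (1::'a))"
    by (rule closure_closed[OF closed_scalars])
  ultimately show ?thesis by auto
qed

lemma sQs: "s * Q n j * adj s = Q (Suc n) (2 * j)"
proof -
  have a: "U (- j) * adj s = adj s * U (- (2 * j))" using U_Sa[of "- j" 1] by (simp add: Sa_def)
  have "s * Q n j * adj s = (s * U j) * S n * Sa n * (U (- j) * adj s)" by (simp add: Q_def mult.assoc)
  also have "\<dots> = U (2 * j) * (s * S n) * (Sa n * adj s) * U (- (2 * j))" by (simp add: a s_U mult.assoc)
  also have "\<dots> = Q (Suc n) (2 * j)" by (simp add: Q_def S_Suc Sa_Suc)
  finally show ?thesis .
qed

end

lemma star_hom_inv:
  assumes h: "star_hom f" and b: "bij f"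
  shows "star_hom (inv f)"
proof -
  have fi: "\<And>y. f (inv f y) = y" using b by (simp add: bij_is_surj surj_f_inv_f)
  have inj: "\<And>x y. f x = f y \<Longrightarrow> x = y" using b by (metis bij_is_inj injD)
  show ?thesis unfolding star_hom_def
  proof (intro conjI allI)
    fix x y show "inv f (x + y) = inv f x + inv f y"
      by (rule inj) (metis fi h star_hom_def)
  next
    fix c x show "inv f (cscale c x) = cscale c (inv f x)"
      by (rule inj) (metis fi h star_hom_def)
  next
    fix x y show "inv f (x * y) = inv f x * inv f y"
      by (rule inj) (metis fi h star_hom_def)
  next
    fix x show "inv f (adj x) = adj (inv f x)"
      by (rule inj) (metis fi h star_hom_def)
  qed
qed

lemma star_hom_comp: "star_hom f \<Longrightarrow> star_hom g \<Longrightarrow> star_hom (f \<circ> g)"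
  unfolding star_hom_def by simp

theorem proposition4p8:
  fixes u s2 :: "'a::cstar_algebra"
    and \<phi>1 \<phi>2 :: "'a \<Rightarrow> 'a"
  assumes "Q2_relations u s2"
    and "generates {u, s2}"
    and "star_hom \<phi>1"
    and "star_aut \<phi>2"
    and "\<forall>x\<in>B2 u s2. \<phi>1 x = \<phi>2 x"
  shows "\<exists>t. cmod t = 1 \<and> (\<exists>\<alpha>. is_gauge u s2 t \<alpha> \<and> \<phi>1 = \<phi>2 \<circ> \<alpha>)"
proof -
  interpret q2 u s2 by (rule q2.intro) (rule assms(1))
  have h2: "star_hom \<phi>2" and b2: "bij \<phi>2" using assms(4) by (auto simp: star_aut_def)
  define \<alpha> where "\<alpha> = inv \<phi>2 \<circ> \<phi>1"
  have ha: "star_hom \<alpha>" unfolding \<alpha>_def by (intro star_hom_comp star_hom_inv h2 b2 assms(3))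
  have a_add: "\<And>x y. \<alpha> (x + y) = \<alpha> x + \<alpha> y" and a_mult: "\<And>x y. \<alpha> (x * y) = \<alpha> x * \<alpha> y"
    and a_adj: "\<And>x. \<alpha> (adj x) = adj (\<alpha> x)" using ha by (auto simp: star_hom_def)
  have afix: "\<alpha> y = y" if "y \<in> B2 u s2" for y
    using that assms(5) b2 by (simp add: \<alpha>_def bij_is_inj inv_f_f)
  have inB2: "upow u m * s2 ^ n * adj s2 ^ n * upow u k \<in> B2 u s2" for m k n
    unfolding B2_def closed_cspan_def by (rule subsetD[OF closure_subset], rule cspan_mem) blast
  have Q_B2: "Q n j \<in> B2 u s2" for n j using inB2[of j n "- j"] by (simp add: Q_def U_def S_def Sa_def)
  have one_B2: "1 \<in> B2 u s2" using inB2[of 0 0 0] by (simp add: upow_def)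
  have u_B2: "u \<in> B2 u s2" using inB2[of 1 0 0] by (simp add: upow_def)
  have P_B2: "s2 * adj s2 \<in> B2 u s2" using inB2[of 0 1 0] by (simp add: upow_def)
  have su_B2: "s2 * u * adj s2 \<in> B2 u s2"
  proof -
    have "s2 * u = U 2 * s2" using s_U[of 1] by (simp add: U1)
    then show ?thesis using inB2[of 2 1 0] by (simp add: U_def upow_def)
  qed
  define w where "w = \<alpha> s2"
  define x where "x = adj s2 * w"
  have a1: "\<alpha> 1 = 1" using afix one_B2 by simp
  have ww: "w * adj w = s2 * adj s2" using afix[OF P_B2] by (simp add: w_def a_mult a_adj)
  have w1: "adj w * w = 1" using a1 by (simp add: w_def ss flip: a_adj a_mult)
  have sw: "s2 * adj s2 * w = w"
  proof -
    have "s2 * adj s2 * s2 = s2" by (simp add: mult.assoc ss)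
    then have "\<alpha> (s2 * adj s2) * w = w" by (metis a_mult w_def)
    then show ?thesis using afix[OF P_B2] by simp
  qed
  have sx: "s2 * x = w" using sw by (simp add: x_def mult.assoc)
  have xx: "adj x * x = 1"
  proof -
    have "adj x * x = adj w * (s2 * adj s2 * w)" by (simp add: x_def adj_mult adj_adj mult.assoc)
    then show ?thesis using sw w1 by simp
  qed
  have comm: "x * y = y * x" if "y \<in> B2 u s2" "s2 * y * adj s2 \<in> B2 u s2" for y
  proof -
    have "\<alpha> (s2 * y * adj s2) = w * y * adj w" using afix[OF that(1)] by (simp add: w_def a_mult a_adj)
    then have "s2 * (x * y * adj x) * adj s2 = s2 * y * adj s2"
      using afix[OF that(2)] by (simp add: adj_mult mult.assoc flip: sx)
    then have "adj s2 * (s2 * (x * y * adj x) * adj s2) * s2 = adj s2 * (s2 * y * adj s2) * s2" by simp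
    then have xyx: "x * y * adj x = y" by (simp add: mult.assoc ss) (simp add: ss flip: mult.assoc)
    have "x * y = x * y * (adj x * x)" using xx by simp
    also have "\<dots> = y * x" using xyx by (simp flip: mult.assoc)
    finally show ?thesis .
  qed
  have xu: "x * u = u * x" using comm[OF u_B2 su_B2] .
  have xQ: "\<forall>n j. x * Q n j = Q n j * x"
  proof (intro allI)
    fix n j
    have "s2 * Q n j * adj s2 \<in> B2 u s2" using Q_B2 by (simp add: sQs)
    then show "x * Q n j = Q n j * x" using comm Q_B2 by blast
  qed
  obtain c where c: "x = cscale c 1" using central_scalar[OF assms(2) xu xQ] by blast
  have "cmod c = 1"
  proof -
    have "adj x * x = cscale (c * cnj c) 1"
      by (simp add: c adj_cscale cscale_mult_left cscale_mult_right cscale_cscale)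
    then have "cmod (c * cnj c) = 1" using xx norm_cscale[of "c * cnj c" "1::'a"] by simp
    then have e: "cmod c * cmod c = 1" by (simp add: norm_mult)
    then have "(cmod c - 1) * (cmod c + 1) = 0" by (simp add: algebra_simps)
    moreover have "cmod c + 1 \<noteq> 0" using norm_ge_zero[of c] by linarith
    ultimately show ?thesis by simp
  qed
  moreover have "is_gauge u s2 c \<alpha>"
    unfolding is_gauge_def
  proof (intro conjI)
    show "star_hom \<alpha>" by (rule ha)
    show "\<alpha> u = u" using afix[OF u_B2] .
    show "\<alpha> s2 = cscale c s2" using sx by (simp add: w_def c cscale_mult_right)
  qed
  moreover have "\<phi>1 = \<phi>2 \<circ> \<alpha>"
    by (rule ext) (simp add: \<alpha>_def b2 bij_is_surj surj_f_inv_f)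
  ultimately show ?thesis by blast
qed

end
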